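(* Let $A$ and $B$ be automata with $A\le_{*T}B$. Then (1) there exist automata $C,D$ with $A\le_H C$, $C\le_P D$ and $D\le_R B$; (2) if moreover $B$ has finite invisible nondeterminism, then there exist automata $C,D$ with $A\le_H C$, $C\le_{iP} D$ and $D\le_R B$.
   Context: An automaton $A$ consists of a set $\mathrm{states}(A)$ of states, a nonempty set $\mathrm{start}(A)\subseteq\mathrm{states}(A)$ of start states, a set $\mathrm{acts}(A)$ of actions containing a distinguished internal action $\tau$, and a set $\mathrm{steps}(A)\subseteq\mathrm{states}(A)\times\mathrm{acts}(A)\times\mathrm{states}(A)$ of steps; write $s\xrightarrow{a}_A t$ for $(s,a,t)\in\mathrm{steps}(A)$. An execution fragment of $A$ is a finite or infinite alternating sequence $s_0a_1s_1a_2s_2\cdots$ of states and actions, beginning with a state and, if finite, ending with a state, such that $s_{i-1}\xrightarrow{a_i}_A s_i$ for all $i>0$. An execution is an execution fragment whose first state is a start state. The trace of an execution fragment is the subsequence of its non-$\tau$ actions; a trace of $A$ is the trace of some execution of $A$, and $\mathrm{traces}^*(A)$ is the set of finite traces of $A$. $A\le_{*T}B$ means $\mathrm{traces}^*(A)\subseteq\mathrm{traces}^*(B)$. For states $s,t$ and a finite sequence $\beta$ of non-$\tau$ actions, write $s\stackrel{\beta}{\Rightarrow}_A t$ if $A$ has a finite execution fragment starting in $s$, with trace $\beta$, ending in $t$. $A$ has finite invisible nondeterminism if $\mathrm{start}(A)$ is finite and for every state $s$ and finite sequence $\beta$ of non-$\tau$ actions there are only finitely many $t$ with $s\stackrel{\beta}{\Rightarrow}_A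 t$. For a relation $R$ write $R[s]=\{u\mid (s,u)\in R\}$; $R$ is image-finite if every $R[s]$ is finite. A step refinement from $A$ to $B$ is a partial function $r:\mathrm{states}(A)\rightharpoonup\mathrm{states}(B)$ such that (1) if $s\in\mathrm{start}(A)$ then $s\in\mathrm{dom}(r)$ and $r(s)\in\mathrm{start}(B)$; (2) if $s\xrightarrow{a}_A t$ and $s\in\mathrm{dom}(r)$ then $t\in\mathrm{dom}(r)$ and either $r(s)=r(t)$ and $a=\tau$, or $r(s)\xrightarrow{a}_B r(t)$. Write $A\le_R B$ if one exists. A normed forward simulation from $A$ to $B$ is a pair $(f,n)$ where $f\subseteq\mathrm{states}(A)\times\mathrm{states}(B)$ and $n:\mathrm{steps}(A)\times\mathrm{states}(B)\to S$ for some set $S$ with a well-founded strict order $<$, such that: (1) if $s\in\mathrm{start}(A)$ then $f[s]\cap\mathrm{start}(B)\neq\emptyset$; (2) if $s\xrightarrow{a}_A t$ and $u\in f[s]$ then (a) $u\in f[t]$ and $a=\tau$, or (b) there is $v\in f[t]$ with $u\xrightarrow{a}_B v$, or (c) there is $v\in f[s]$ with $u\xrightarrow{\tau}_B v$ and $n(s\xrightarrow{a}t,v)<n(s\xrightarrow{a}t,u)$. A normed backward simulation from $A$ to $B$ is a pair $(b,n)$ where $b\subseteq\mathrm{states}(A)\times\mathrm{states}(B)$ is total (every $s\in\mathrm{states}(A)$ has $b[s]\neq\emptyset$) and $n:(\mathrm{steps}(A)\cup\mathrm{start}(A))\times\mathrm{states}(B)\to S$ for some set $S$ with a well-founded strict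 order $<$, such that: (1) if $s\in\mathrm{start}(A)$ and $u\in b[s]$ then (a) $u\in\mathrm{start}(B)$, or (b) there is $v\in b[s]$ with $v\xrightarrow{\tau}_B u$ and $n(s,v)<n(s,u)$; (2) if $t\xrightarrow{a}_A s$ and $u\in b[s]$ then (a) $u\in b[t]$ and $a=\tau$, or (b) there is $v\in b[t]$ with $v\xrightarrow{a}_B u$, or (c) there is $v\in b[s]$ with $v\xrightarrow{\tau}_B u$ and $n(t\xrightarrow{a}s,v)<n(t\xrightarrow{a}s,u)$. A normed history relation from $A$ to $B$ is a pair $(r,n)$ such that $r$ is a step refinement from $B$ to $A$ and $(r^{-1},n)$ is a normed forward simulation from $A$ to $B$; write $A\le_H B$ if one exists. A normed prophecy relation from $A$ to $B$ is a pair $(r,n)$ such that $r$ is a step refinement from $B$ to $A$ and $(r^{-1},n)$ is a normed backward simulation from $A$ to $B$; write $A\le_P B$ if one exists, and $A\le_{iP}B$ if one exists with $r^{-1}$ image-finite. *)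

theory Defs
  imports Main
begin

datatype 'a act = Tau | Ext 'a

record ('s, 'a) automaton =
  states :: "'s set"
  start  :: "'s set"
  acts   :: "'a act set"
  steps  :: "('s \<times> 'a act \<times> 's) set"

definition is_automaton :: "('s, 'a) automaton \<Rightarrow> bool" where
  "is_automaton A \<longleftrightarrow>
     start A \<noteq> {} \<and> start A \<subseteq> states A \<and> Tau \<in> acts A \<and>
     steps A \<subseteq> states A \<times> acts A \<times> states A"

text \<open>A finite execution fragment s0 a1 s1 ... an sn is represented by its first
  state s0 and the list [(a1,s1),...,(an,sn)].\<close>
fun exec_frag :: "('s, 'a) automaton \<Rightarrow> 's \<Rightarrow> ('a act \<times> 's) list \<Rightarrow> bool" where
  "exec_frag A s [] \<longleftrightarrow> s \<in> states A"
| "exec_frag A s ((a, t) # xs) \<longleftrightarrow> (s, a, t) \<in> steps A \<and> exec_frag A t xs"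

fun last_state :: "'s \<Rightarrow> ('a act \<times> 's) list \<Rightarrow> 's" where
  "last_state s [] = s"
| "last_state s ((a, t) # xs) = last_state t xs"

fun trace :: "('a act \<times> 's) list \<Rightarrow> 'a list" where
  "trace [] = []"
| "trace ((Tau, t) # xs) = trace xs"
| "trace ((Ext a, t) # xs) = a # trace xs"

definition traces_star :: "('s, 'a) automaton \<Rightarrow> 'a list set" where
  "traces_star A = {trace xs | s xs. s \<in> start A \<and> exec_frag A s xs}"

definition trace_incl :: "('s, 'a) automaton \<Rightarrow> ('t, 'a) automaton \<Rightarrow> bool" where
  "trace_incl A B \<longleftrightarrow> traces_star A \<subseteq> traces_star B"

definition wstep :: "('s, 'a) automaton \<Rightarrow> 's \<Rightarrow> 'a list \<Rightarrow> 's \<Rightarrow> bool" where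
  "wstep A s \<beta> t \<longleftrightarrow> (\<exists>xs. exec_frag A s xs \<and> trace xs = \<beta> \<and> last_state s xs = t)"

definition fin_invis_nondet :: "('s, 'a) automaton \<Rightarrow> bool" where
  "fin_invis_nondet A \<longleftrightarrow> finite (start A) \<and>
     (\<forall>s \<in> states A. \<forall>\<beta>. finite {t. wstep A s \<beta> t})"

definition image_finite :: "('s \<times> 't) set \<Rightarrow> bool" where
  "image_finite R \<longleftrightarrow> (\<forall>s. finite (R `` {s}))"

definition step_refinement ::
  "('s, 'a) automaton \<Rightarrow> ('t, 'a) automaton \<Rightarrow> ('s \<Rightarrow> 't option) \<Rightarrow> bool" where
  "step_refinement A B r \<longleftrightarrow>
     dom r \<subseteq> states A \<and> ran r \<subseteq> states B \<and>
     (\<forall>s \<in> start A. s \<in> dom r \<and> the (r s) \<in> start B) \<and>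
     (\<forall>s a t. (s, a, t) \<in> steps A \<and> s \<in> dom r \<longrightarrow>
        t \<in> dom r \<and>
        ((r s = r t \<and> a = Tau) \<or> (the (r s), a, the (r t)) \<in> steps B))"

definition le_R :: "('s, 'a) automaton \<Rightarrow> ('t, 'a) automaton \<Rightarrow> bool" where
  "le_R A B \<longleftrightarrow> (\<exists>r. step_refinement A B r)"

definition inv_rel :: "('s \<Rightarrow> 't option) \<Rightarrow> ('t \<times> 's) set" where
  "inv_rel r = {(u, s). r s = Some u}"

definition wf_strict :: "('o \<times> 'o) set \<Rightarrow> bool" where
  "wf_strict lt \<longleftrightarrow> wf lt \<and> trans lt"

definition normed_fwd_sim ::
  "('s, 'a) automaton \<Rightarrow> ('t, 'a) automaton \<Rightarrow> ('s \<times> 't) set \<Rightarrow>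
   (('s \<times> 'a act \<times> 's) \<Rightarrow> 't \<Rightarrow> 'o) \<Rightarrow> ('o \<times> 'o) set \<Rightarrow> bool" where
  "normed_fwd_sim A B f n lt \<longleftrightarrow>
     f \<subseteq> states A \<times> states B \<and> wf_strict lt \<and>
     (\<forall>s \<in> start A. f `` {s} \<inter> start B \<noteq> {}) \<and>
     (\<forall>s a t u. (s, a, t) \<in> steps A \<and> u \<in> f `` {s} \<longrightarrow>
        (u \<in> f `` {t} \<and> a = Tau) \<or>
        (\<exists>v \<in> f `` {t}. (u, a, v) \<in> steps B) \<or>
        (\<exists>v \<in> f `` {s}. (u, Tau, v) \<in> steps B \<and> (n (s, a, t) v, n (s, a, t) u) \<in> lt))"

text \<open>For backward simulations the norm is defined on (steps(A) \<union> start(A)) \<times> states(B);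
  the disjoint union is modelled by the sum type (Inl for steps, Inr for start states).\<close>
definition normed_bwd_sim ::
  "('s, 'a) automaton \<Rightarrow> ('t, 'a) automaton \<Rightarrow> ('s \<times> 't) set \<Rightarrow>
   (('s \<times> 'a act \<times> 's) + 's \<Rightarrow> 't \<Rightarrow> 'o) \<Rightarrow> ('o \<times> 'o) set \<Rightarrow> bool" where
  "normed_bwd_sim A B b n lt \<longleftrightarrow>
     b \<subseteq> states A \<times> states B \<and> wf_strict lt \<and>
     (\<forall>s \<in> states A. b `` {s} \<noteq> {}) \<and>
     (\<forall>s \<in> start A. \<forall>u \<in> b `` {s}.
        u \<in> start B \<or>
        (\<exists>v \<in> b `` {s}. (v, Tau, u) \<in> steps B \<and> (n (Inr s) v, n (Inr s) u) \<in> lt)) \<and>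
     (\<forall>t a s u. (t, a, s) \<in> steps A \<and> u \<in> b `` {s} \<longrightarrow>
        (u \<in> b `` {t} \<and> a = Tau) \<or>
        (\<exists>v \<in> b `` {t}. (v, a, u) \<in> steps B) \<or>
        (\<exists>v \<in> b `` {s}. (v, Tau, u) \<in> steps B \<and>
                         (n (Inl (t, a, s)) v, n (Inl (t, a, s)) u) \<in> lt))"

text \<open>The ordered set S of norm values is existentially quantified. Without loss of
  generality S is taken to be the domain of the norm (pulling back the order along n
  preserves well-foundedness and transitivity), which fixes its type.\<close>
definition le_H :: "('s, 'a) automaton \<Rightarrow> ('t, 'a) automaton \<Rightarrow> bool" where
  "le_H A B \<longleftrightarrow> (\<exists>r (n :: ('s \<times> 'a act \<times> 's) \<Rightarrow> 't \<Rightarrow> ('s \<times> 'a act \<times> 's) \<times> 't) lt.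
      step_refinement B A r \<and> normed_fwd_sim A B (inv_rel r) n lt)"

definition le_P :: "('s, 'a) automaton \<Rightarrow> ('t, 'a) automaton \<Rightarrow> bool" where
  "le_P A B \<longleftrightarrow> (\<exists>r (n :: ('s \<times> 'a act \<times> 's) + 's \<Rightarrow> 't \<Rightarrow> (('s \<times> 'a act \<times> 's) + 's) \<times> 't) lt.
      step_refinement B A r \<and> normed_bwd_sim A B (inv_rel r) n lt)"

definition le_iP :: "('s, 'a) automaton \<Rightarrow> ('t, 'a) automaton \<Rightarrow> bool" where
  "le_iP A B \<longleftrightarrow> (\<exists>r (n :: ('s \<times> 'a act \<times> 's) + 's \<Rightarrow> 't \<Rightarrow> (('s \<times> 'a act \<times> 's) + 's) \<times> 't) lt.
      step_refinement B A r \<and> normed_bwd_sim A B (inv_rel r) n lt \<and>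
      image_finite (inv_rel r))"

text \<open>State type used for the intermediate automata C and D.\<close>
type_synonym ('sa, 'sb, 'a) big_state = "('sa + 'sb + 'a act + nat) list set"

end

theory Submission
  imports Defs
begin

fun tr :: "'a act \<Rightarrow> 'a list" where
  "tr Tau = []" | "tr (Ext x) = [x]"

lemma trace_append: "trace (xs @ ys) = trace xs @ trace ys"
  by (induction xs rule: trace.induct) auto

lemma trace_single: "trace [(a, t)] = tr a"
  by (cases a) auto

lemma last_state_append: "last_state s (xs @ ys) = last_state (last_state s xs) ys"
  by (induction xs arbitrary: s) auto

lemma exec_frag_first: "is_automaton X \<Longrightarrow> exec_frag X s xs \<Longrightarrow> s \<in> states X"
  by (cases xs) (auto simp: is_automaton_def)

lemma exec_frag_last: "is_automaton X \<Longrightarrow> exec_frag X s xs \<Longrightarrow> last_state s xs \<in> states X"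
  by (induction xs arbitrary: s) (auto simp: is_automaton_def)

lemma exec_frag_snoc:
  "is_automaton X \<Longrightarrow> exec_frag X s (xs @ [(a, t)]) =
     (exec_frag X s xs \<and> (last_state s xs, a, t) \<in> steps X \<and> t \<in> states X)"
  by (induction xs arbitrary: s) (auto simp: is_automaton_def)

definition tstep :: "('s, 'a) automaton \<Rightarrow> 's \<Rightarrow> 's \<Rightarrow> bool" where
  "tstep X = (\<lambda>x y. (x, Tau, y) \<in> steps X)"

lemma wstep_refl: "s \<in> states X \<Longrightarrow> wstep X s [] s"
  unfolding wstep_def by (rule exI[of _ "[]"]) auto

lemma wstep_snoc:
  assumes "is_automaton X" "wstep X s \<beta> v" "(v, a, w) \<in> steps X"
  shows "wstep X s (\<beta> @ tr a) w"
proof -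
  obtain xs where xs: "exec_frag X s xs" "trace xs = \<beta>" "last_state s xs = v"
    using assms(2) unfolding wstep_def by blast
  have "w \<in> states X" using assms(1,3) by (auto simp: is_automaton_def)
  then show ?thesis unfolding wstep_def
    using xs assms
    by (intro exI[of _ "xs @ [(a, w)]"])
       (simp add: exec_frag_snoc trace_append trace_single last_state_append)
qed

lemma wstep_tau:
  assumes "is_automaton X" "(tstep X ^^ k) v w" "wstep X s \<beta> v"
  shows "wstep X s \<beta> w"
  using assms(2)
proof (induction k arbitrary: w)
  case 0 then show ?case using assms(3) by simp
next
  case (Suc k)
  from Suc.prems obtain y where y: "(tstep X ^^ k) v y" "tstep X y w" by (rule relpowp_Suc_E)
  have "wstep X s \<beta> y" by (rule Suc.IH[OF y(1)])
  from wstep_snoc[OF assms(1) this, of Tau w] y(2) show ?case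
    by (simp add: tstep_def)
qed

lemma wstep_states:
  assumes "is_automaton X" "wstep X s \<beta> v" shows "s \<in> states X \<and> v \<in> states X"
proof -
  obtain xs where "exec_frag X s xs" "last_state s xs = v"
    using assms(2) unfolding wstep_def by blast
  then show ?thesis using exec_frag_first[OF assms(1)] exec_frag_last[OF assms(1)] by metis
qed

lemma dec0_aux:
  "is_automaton X \<Longrightarrow> exec_frag X s xs \<Longrightarrow> trace xs = [] \<Longrightarrow>
    \<exists>k. (tstep X ^^ k) s (last_state s xs)"
proof (induction xs rule: rev_induct)
  case Nil show ?case by (intro exI[of _ 0]) simp
next
  case (snoc p xs)
  obtain a t where p: "p = (a, t)" by (cases p)
  have tt: "trace xs @ tr a = []"
    using snoc.prems(3) by (simp add: p trace_append trace_single)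
  have a: "a = Tau" using tt by (cases a) auto
  have tx: "trace xs = []" using tt by simp
  have ex: "exec_frag X s xs" "(last_state s xs, a, t) \<in> steps X"
    using snoc.prems(2) exec_frag_snoc[OF snoc.prems(1)] p by auto
  obtain k where "(tstep X ^^ k) s (last_state s xs)"
    using snoc.IH[OF snoc.prems(1) ex(1) tx] by blast
  moreover have "tstep X (last_state s xs) t"
    using ex a by (simp add: tstep_def)
  ultimately have R: "(tstep X ^^ Suc k) s t" by (rule relpowp_Suc_I)
  have L: "last_state s (xs @ [p]) = t" by (simp add: p last_state_append)
  show ?case unfolding L by (rule exI[of _ "Suc k"]) (rule R)
qed

lemma dec0: "is_automaton X \<Longrightarrow> wstep X s [] u \<Longrightarrow> \<exists>k. (tstep X ^^ k) s u"
proof -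
  assume a: "is_automaton X" "wstep X s [] u"
  then obtain xs where "exec_frag X s xs" "trace xs = []" "last_state s xs = u"
    unfolding wstep_def by blast
  then show ?thesis using dec0_aux[OF a(1)] by metis
qed

lemma decX_aux:
  "is_automaton X \<Longrightarrow> exec_frag X s xs \<Longrightarrow> trace xs = \<beta> @ [x] \<Longrightarrow>
    \<exists>v w k. wstep X s \<beta> v \<and> (v, Ext x, w) \<in> steps X \<and> (tstep X ^^ k) w (last_state s xs)"
proof (induction xs rule: rev_induct)
  case Nil then show ?case by simp
next
  case (snoc p xs)
  obtain a t where p: "p = (a, t)" by (cases p)
  have ex: "exec_frag X s xs" "(last_state s xs, a, t) \<in> steps X"
    using snoc.prems p exec_frag_snoc[OF snoc.prems(1)] by auto
  show ?case
  proof (cases a)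
    case Tau
    then have "trace xs = \<beta> @ [x]" using snoc.prems(3) by (simp add: p trace_append trace_single)
    then obtain v w k where "wstep X s \<beta> v" "(v, Ext x, w) \<in> steps X" "(tstep X ^^ k) w (last_state s xs)"
      using snoc.IH[OF snoc.prems(1) ex(1)] by blast
    moreover have "tstep X (last_state s xs) t" using ex Tau by (simp add: tstep_def)
    ultimately have R: "(tstep X ^^ Suc k) w t" by (metis relpowp_Suc_I)
    have L: "last_state s (xs @ [p]) = t" by (simp add: p last_state_append)
    show ?thesis unfolding L
      by (intro exI[of _ v] exI[of _ w] exI[of _ "Suc k"] conjI) fact+
  next
    case (Ext y)
    then have "trace xs = \<beta>" "y = x" using snoc.prems(3) by (simp_all add: p trace_append trace_single)
    moreover have "last_state s (xs @ [p]) = t" by (simp add: p last_state_append)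
    moreover have "wstep X s \<beta> (last_state s xs)" using ex(1) \<open>trace xs = \<beta>\<close> by (auto simp: wstep_def)
    ultimately show ?thesis using ex Ext
      by (intro exI[of _ "last_state s xs"] exI[of _ t] exI[of _ 0]) simp
  qed
qed

lemma decX: "is_automaton X \<Longrightarrow> wstep X s (\<beta> @ [x]) u \<Longrightarrow>
    \<exists>v w k. wstep X s \<beta> v \<and> (v, Ext x, w) \<in> steps X \<and> (tstep X ^^ k) w u"
proof -
  assume a: "is_automaton X" "wstep X s (\<beta> @ [x]) u"
  then obtain xs where "exec_frag X s xs" "trace xs = \<beta> @ [x]" "last_state s xs = u"
    unfolding wstep_def by blast
  then show ?thesis using decX_aux[OF a(1)] by blast
qed

definition dist :: "('s, 'a) automaton \<Rightarrow> 's set \<Rightarrow> 's \<Rightarrow> nat" where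
  "dist X S u = (LEAST k. \<exists>w\<in>S. (tstep X ^^ k) w u)"

lemma dist_dec:
  assumes "(tstep X ^^ k) w u" "w \<in> S"
  shows "u \<in> S \<or> (\<exists>v j w'. w' \<in> S \<and> (tstep X ^^ j) w' v \<and> (v, Tau, u) \<in> steps X \<and> dist X S v < dist X S u)"
proof -
  let ?m = "dist X S u"
  have "\<exists>w\<in>S. (tstep X ^^ ?m) w u" unfolding dist_def
    by (rule LeastI[of _ k]) (use assms in blast)
  then obtain w0 where w0: "w0 \<in> S" "(tstep X ^^ ?m) w0 u" by blast
  show ?thesis
  proof (cases ?m)
    case 0 then show ?thesis using w0 by simp
  next
    case (Suc j)
    have "(tstep X ^^ Suc j) w0 u" using w0(2) Suc by metis
    then obtain v where v: "(tstep X ^^ j) w0 v" "tstep X v u" by (rule relpowp_Suc_E)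
    have "dist X S v \<le> j" unfolding dist_def by (rule Least_le) (use v w0 in blast)
    then have "dist X S v < ?m" using Suc by simp
    moreover have "(v, Tau, u) \<in> steps X" using v(2) by (simp add: tstep_def)
    ultimately show ?thesis using v(1) w0(1) by blast
  qed
qed

definition mapA :: "('s \<Rightarrow> 't) \<Rightarrow> ('s, 'a) automaton \<Rightarrow> ('t, 'a) automaton" where
  "mapA h X = \<lparr>states = h ` states X, start = h ` start X, acts = acts X,
     steps = (\<lambda>(x, a, y). (h x, a, h y)) ` steps X\<rparr>"

lemma mapA_sel[simp]: "states (mapA h X) = h ` states X" "start (mapA h X) = h ` start X"
  "acts (mapA h X) = acts X" "steps (mapA h X) = (\<lambda>(x, a, y). (h x, a, h y)) ` steps X"
  by (simp_all add: mapA_def)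

lemma mapA_id: "mapA id X = X"
  by (cases X) (simp add: mapA_def)

lemma steps_mapA_iff: "inj h \<Longrightarrow> ((h x, a, h y) \<in> (\<lambda>(x, a, y). (h x, a, h y)) ` S) = ((x, a, y) \<in> S)"
  by (auto simp: inj_eq intro: rev_image_eqI[of "(x, a, y)"])

lemma steps_mapA_E: "(s, a, t) \<in> steps (mapA h X) \<Longrightarrow> (\<And>x y. s = h x \<Longrightarrow> t = h y \<Longrightarrow> (x, a, y) \<in> steps X \<Longrightarrow> P) \<Longrightarrow> P"
  by auto

lemma is_automaton_mapA: "is_automaton X \<Longrightarrow> is_automaton (mapA h X)"
  unfolding is_automaton_def by auto

definition maprel :: "('s \<Rightarrow> 't) \<Rightarrow> ('u \<Rightarrow> 'v) \<Rightarrow> ('s \<times> 'u) set \<Rightarrow> ('t \<times> 'v) set" where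
  "maprel h g R = (\<lambda>(x, y). (h x, g y)) ` R"

lemma maprel_img: "inj h \<Longrightarrow> maprel h g R `` {h x} = g ` (R `` {x})"
  unfolding maprel_def by (auto simp: inj_eq)

lemma maprel_img_out: "z \<notin> range h \<Longrightarrow> maprel h g R `` {z} = {}"
  unfolding maprel_def by auto

definition mapr :: "('s \<Rightarrow> 't) \<Rightarrow> ('u \<Rightarrow> 'v) \<Rightarrow> ('s \<Rightarrow> 'u option) \<Rightarrow> 't \<Rightarrow> 'v option" where
  "mapr h g r z = (if z \<in> range h then map_option g (r (inv h z)) else None)"

lemma mapr_h[simp]: "inj h \<Longrightarrow> mapr h g r (h x) = map_option g (r x)"
  by (simp add: mapr_def)

lemma inv_rel_mapr: "inj h \<Longrightarrow> inv_rel (mapr h g r) = maprel g h (inv_rel r)"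
proof (intro set_eqI iffI)
  fix p assume h: "inj h" and p: "p \<in> inv_rel (mapr h g r)"
  obtain u z where uz: "p = (u, z)" by (cases p)
  then have m: "mapr h g r z = Some u" using p by (simp add: inv_rel_def)
  then have "z \<in> range h" by (auto simp: mapr_def split: if_splits)
  then obtain x where x: "z = h x" by auto
  then obtain u0 where "r x = Some u0" "u = g u0" using m h by auto
  then show "p \<in> maprel g h (inv_rel r)" unfolding maprel_def inv_rel_def
    using uz x by (intro rev_image_eqI[of "(u0, x)"]) auto
next
  fix p assume h: "inj h" and p: "p \<in> maprel g h (inv_rel r)"
  then obtain u0 x where "p = (g u0, h x)" "r x = Some u0"
    unfolding maprel_def inv_rel_def by auto
  then show "p \<in> inv_rel (mapr h g r)" using h by (simp add: inv_rel_def)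
qed

lemma SR_map:
  assumes sr: "step_refinement X Y r" and h: "inj h" and g: "inj g"
  shows "step_refinement (mapA h X) (mapA g Y) (mapr h g r)"
  unfolding step_refinement_def
proof (intro conjI allI ballI impI)
  show "dom (mapr h g r) \<subseteq> states (mapA h X)"
    using sr h by (auto simp: step_refinement_def mapr_def dom_def)
  show "ran (mapr h g r) \<subseteq> states (mapA g Y)"
    using sr h by (auto simp: step_refinement_def mapr_def ran_def split: if_splits)
next
  fix s assume "s \<in> start (mapA h X)"
  then obtain x where x: "s = h x" "x \<in> start X" by auto
  then show "s \<in> dom (mapr h g r)" "the (mapr h g r s) \<in> start (mapA g Y)"
    using sr h by (auto simp: step_refinement_def)
next
  fix s a t assume st: "(s, a, t) \<in> steps (mapA h X) \<and> s \<in> dom (mapr h g r)"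
  then obtain x y where xy: "s = h x" "t = h y" "(x, a, y) \<in> steps X" by (auto elim: steps_mapA_E)
  have "x \<in> dom r" using conjunct2[OF st] xy(1) h by auto
  then have "y \<in> dom r \<and> (r x = r y \<and> a = Tau \<or> (the (r x), a, the (r y)) \<in> steps Y)"
    using sr xy(3) unfolding step_refinement_def by blast
  then show "t \<in> dom (mapr h g r)" "mapr h g r s = mapr h g r t \<and> a = Tau \<or>
        (the (mapr h g r s), a, the (mapr h g r t)) \<in> steps (mapA g Y)"
    using xy h g \<open>x \<in> dom r\<close> by (auto simp: steps_mapA_iff)
qed

lemma fwd_map:
  assumes fs: "normed_fwd_sim X Y f n lt" and h: "inj h" and g: "inj g"
  shows "normed_fwd_sim (mapA h X) (mapA g Y) (maprel h g f)
           (\<lambda>(x, a, y) z. n (inv h x, a, inv h y) (inv g z)) lt"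
  unfolding normed_fwd_sim_def
proof (intro conjI allI ballI impI)
  show "maprel h g f \<subseteq> states (mapA h X) \<times> states (mapA g Y)"
    using fs by (auto simp: normed_fwd_sim_def maprel_def)
  show "wf_strict lt" using fs by (simp add: normed_fwd_sim_def)
next
  fix s assume "s \<in> start (mapA h X)"
  then obtain x where x: "s = h x" "x \<in> start X" by auto
  then obtain u where "u \<in> f `` {x}" "u \<in> start Y" using fs unfolding normed_fwd_sim_def by blast
  then show "maprel h g f `` {s} \<inter> start (mapA g Y) \<noteq> {}"
    using x h by (auto simp: maprel_img)
next
  fix s a t u assume st: "(s, a, t) \<in> steps (mapA h X) \<and> u \<in> maprel h g f `` {s}"
  then obtain x y where xy: "s = h x" "t = h y" "(x, a, y) \<in> steps X" by (auto elim: steps_mapA_E)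
  then obtain u0 where u0: "u = g u0" "u0 \<in> f `` {x}" using st h by (auto simp: maprel_img)
  have "(u0 \<in> f `` {y} \<and> a = Tau) \<or> (\<exists>v \<in> f `` {y}. (u0, a, v) \<in> steps Y) \<or>
        (\<exists>v \<in> f `` {x}. (u0, Tau, v) \<in> steps Y \<and> (n (x, a, y) v, n (x, a, y) u0) \<in> lt)"
    using fs xy(3) u0(2) unfolding normed_fwd_sim_def by blast
  then show "u \<in> maprel h g f `` {t} \<and> a = Tau \<or>
       (\<exists>v\<in>maprel h g f `` {t}. (u, a, v) \<in> steps (mapA g Y)) \<or>
       (\<exists>v\<in>maprel h g f `` {s}. (u, Tau, v) \<in> steps (mapA g Y) \<and>
          ((\<lambda>(x, a, y) z. n (inv h x, a, inv h y) (inv g z)) (s, a, t) v,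
           (\<lambda>(x, a, y) z. n (inv h x, a, inv h y) (inv g z)) (s, a, t) u) \<in> lt)"
    using xy u0 h g by (auto simp: maprel_img steps_mapA_iff)
qed

lemma bwd_map:
  assumes bs: "normed_bwd_sim X Y b n lt" and h: "inj h" and g: "inj g"
  shows "normed_bwd_sim (mapA h X) (mapA g Y) (maprel h g b)
           (\<lambda>p z. n (map_sum (\<lambda>(x, a, y). (inv h x, a, inv h y)) (inv h) p) (inv g z)) lt"
  unfolding normed_bwd_sim_def
proof (intro conjI allI ballI impI)
  show "maprel h g b \<subseteq> states (mapA h X) \<times> states (mapA g Y)"
    using bs by (auto simp: normed_bwd_sim_def maprel_def)
  show "wf_strict lt" using bs by (simp add: normed_bwd_sim_def)
next
  fix s assume "s \<in> states (mapA h X)"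
  then obtain x where x: "s = h x" "x \<in> states X" by auto
  then show "maprel h g b `` {s} \<noteq> {}" using bs h by (auto simp: maprel_img normed_bwd_sim_def)
next
  fix s u assume s: "s \<in> start (mapA h X)" and u: "u \<in> maprel h g b `` {s}"
  then obtain x where x: "s = h x" "x \<in> start X" by auto
  then obtain u0 where u0: "u = g u0" "u0 \<in> b `` {x}" using u h by (auto simp: maprel_img)
  have "u0 \<in> start Y \<or> (\<exists>v \<in> b `` {x}. (v, Tau, u0) \<in> steps Y \<and> (n (Inr x) v, n (Inr x) u0) \<in> lt)"
    using bs x(2) u0(2) unfolding normed_bwd_sim_def by blast
  then show "u \<in> start (mapA g Y) \<or>
         (\<exists>v\<in>maprel h g b `` {s}. (v, Tau, u) \<in> steps (mapA g Y) \<and>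
           (n (map_sum (\<lambda>(x, a, y). (inv h x, a, inv h y)) (inv h) (Inr s)) (inv g v),
            n (map_sum (\<lambda>(x, a, y). (inv h x, a, inv h y)) (inv h) (Inr s)) (inv g u)) \<in> lt)"
    using x u0 h g by (auto simp: maprel_img steps_mapA_iff)
next
  fix t a s u assume st: "(t, a, s) \<in> steps (mapA h X) \<and> u \<in> maprel h g b `` {s}"
  then obtain x y where xy: "t = h x" "s = h y" "(x, a, y) \<in> steps X" by (auto elim: steps_mapA_E)
  then obtain u0 where u0: "u = g u0" "u0 \<in> b `` {y}" using st h by (auto simp: maprel_img)
  have "(u0 \<in> b `` {x} \<and> a = Tau) \<or> (\<exists>v \<in> b `` {x}. (v, a, u0) \<in> steps Y) \<or>
        (\<exists>v \<in> b `` {y}. (v, Tau, u0) \<in> steps Y \<and> (n (Inl (x, a, y)) v, n (Inl (x, a, y)) u0) \<in> lt)"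
    using bs xy(3) u0(2) unfolding normed_bwd_sim_def by blast
  then show "u \<in> maprel h g b `` {t} \<and> a = Tau \<or>
       (\<exists>v\<in>maprel h g b `` {t}. (v, a, u) \<in> steps (mapA g Y)) \<or>
       (\<exists>v\<in>maprel h g b `` {s}. (v, Tau, u) \<in> steps (mapA g Y) \<and>
          (n (map_sum (\<lambda>(x, a, y). (inv h x, a, inv h y)) (inv h) (Inl (t, a, s))) (inv g v),
           n (map_sum (\<lambda>(x, a, y). (inv h x, a, inv h y)) (inv h) (Inl (t, a, s))) (inv g u)) \<in> lt)"
    using xy u0 h g by (auto simp: maprel_img steps_mapA_iff)
qed

lemma image_finite_map: "image_finite R \<Longrightarrow> inj h \<Longrightarrow> image_finite (maprel h g R)"
  unfolding image_finite_def
proof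
  fix z assume R: "\<forall>s. finite (R `` {s})" and h: "inj h"
  show "finite (maprel h g R `` {z})"
  proof (cases "z \<in> range h")
    case True then obtain x where "z = h x" by auto
    then show ?thesis using R h by (simp add: maprel_img)
  next
    case False then show ?thesis by (simp add: maprel_img_out)
  qed
qed

lemma wf_strict_inv: "wf_strict lt \<Longrightarrow> wf_strict (inv_image lt f)"
  unfolding wf_strict_def by (simp add: wf_inv_image trans_inv_image)

lemma le_H_intro:
  assumes "step_refinement B A r" "normed_fwd_sim A B (inv_rel r) n lt"
  shows "le_H A B"
  unfolding le_H_def
proof (intro exI conjI)
  show "step_refinement B A r" by fact
  show "normed_fwd_sim A B (inv_rel r) (\<lambda>x y. (x, y)) (inv_image lt (\<lambda>(x, y). n x y))"
    using assms(2) unfolding normed_fwd_sim_def by (auto simp: wf_strict_inv)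
qed

lemma bwd_renorm:
  assumes "normed_bwd_sim A B b n lt"
  shows "normed_bwd_sim A B b (\<lambda>x y. (x, y)) (inv_image lt (\<lambda>(x, y). n x y))"
  using assms unfolding normed_bwd_sim_def by (auto simp: wf_strict_inv)

lemma le_P_intro:
  assumes "step_refinement B A r" "normed_bwd_sim A B (inv_rel r) n lt"
  shows "le_P A B"
  unfolding le_P_def using assms(1) bwd_renorm[OF assms(2)] by blast

lemma le_iP_intro:
  assumes "step_refinement B A r" "normed_bwd_sim A B (inv_rel r) n lt" "image_finite (inv_rel r)"
  shows "le_iP A B"
  unfolding le_iP_def using assms(1,3) bwd_renorm[OF assms(2)] by blast

definition reach :: "('s, 'a) automaton \<Rightarrow> 'a list \<Rightarrow> 's \<Rightarrow> bool" where
  "reach X \<beta> s \<longleftrightarrow> (\<exists>s0\<in>start X. wstep X s0 \<beta> s)"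

lemma reach_start: "is_automaton X \<Longrightarrow> s \<in> start X \<Longrightarrow> reach X [] s"
proof -
  assume a: "is_automaton X" "s \<in> start X"
  then have "s \<in> states X" unfolding is_automaton_def by blast
  then have "wstep X s [] s" by (rule wstep_refl)
  then show ?thesis using a(2) unfolding reach_def by blast
qed

lemma reach_snoc: "is_automaton X \<Longrightarrow> reach X \<beta> v \<Longrightarrow> (v, a, w) \<in> steps X \<Longrightarrow> reach X (\<beta> @ tr a) w"
  unfolding reach_def using wstep_snoc by metis

lemma reach_tau: "is_automaton X \<Longrightarrow> reach X \<beta> v \<Longrightarrow> (tstep X ^^ k) v w \<Longrightarrow> reach X \<beta> w"
  unfolding reach_def using wstep_tau by metis

lemma reach_states: "is_automaton X \<Longrightarrow> reach X \<beta> v \<Longrightarrow> v \<in> states X"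
  unfolding reach_def using wstep_states by metis

lemma reach_traces: "reach X \<beta> v \<Longrightarrow> \<beta> \<in> traces_star X"
  unfolding reach_def wstep_def traces_star_def by blast

lemma traces_reach: "\<beta> \<in> traces_star X \<Longrightarrow> \<exists>v. reach X \<beta> v"
  unfolding reach_def wstep_def traces_star_def by blast

fun cstep :: "('s, 'a) automaton \<Rightarrow> 's \<times> 'a list \<Rightarrow> 'a act \<Rightarrow> 's \<times> 'a list \<Rightarrow> bool" where
  "cstep A (s, \<beta>) a (t, \<beta>') \<longleftrightarrow> reach A \<beta> s \<and> (s, a, t) \<in> steps A \<and> \<beta>' = \<beta> @ tr a"

definition C0 :: "('s, 'a) automaton \<Rightarrow> ('s \<times> 'a list, 'a) automaton" where
  "C0 A = \<lparr>states = {(s, \<beta>). reach A \<beta> s}, start = (\<lambda>s. (s, [])) ` start A, acts = acts A,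
           steps = {(c, a, c'). cstep A c a c'}\<rparr>"

fun dstep :: "('s, 'a) automaton \<Rightarrow> ('t, 'a) automaton \<Rightarrow> ('s \<times> 'a list) \<times> 't \<Rightarrow> 'a act \<Rightarrow>
    ('s \<times> 'a list) \<times> 't \<Rightarrow> bool" where
  "dstep A B ((s, \<beta>), u) a ((t, \<beta>'), v) \<longleftrightarrow> reach A \<beta> s \<and> reach B \<beta> u \<and>
    ((a = Tau \<and> (s, Tau, t) \<in> steps A \<and> \<beta>' = \<beta> \<and> v = u) \<or>
     (a \<noteq> Tau \<and> (s, a, t) \<in> steps A \<and> \<beta>' = \<beta> @ tr a \<and> (u, a, v) \<in> steps B) \<or>
     (a = Tau \<and> t = s \<and> \<beta>' = \<beta> \<and> (u, Tau, v) \<in> steps B))"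

definition D0 :: "('s, 'a) automaton \<Rightarrow> ('t, 'a) automaton \<Rightarrow> (('s \<times> 'a list) \<times> 't, 'a) automaton" where
  "D0 A B = \<lparr>states = {((s, \<beta>), u). reach A \<beta> s \<and> reach B \<beta> u},
     start = {((s, []), u) | s u. s \<in> start A \<and> u \<in> start B}, acts = acts B,
     steps = {(d, a, d'). dstep A B d a d'}\<rparr>"

definition rC :: "('s, 'a) automaton \<Rightarrow> 's \<times> 'a list \<Rightarrow> 's option" where
  "rC A = (\<lambda>(s, \<beta>). if reach A \<beta> s then Some s else None)"

definition rD :: "('s, 'a) automaton \<Rightarrow> ('t, 'a) automaton \<Rightarrow> ('s \<times> 'a list) \<times> 't \<Rightarrow> ('s \<times> 'a list) option" where
  "rD A B = (\<lambda>((s, \<beta>), u). if reach A \<beta> s \<and> reach B \<beta> u then Some (s, \<beta>) else None)"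

definition rDB :: "('s, 'a) automaton \<Rightarrow> ('t, 'a) automaton \<Rightarrow> ('s \<times> 'a list) \<times> 't \<Rightarrow> 't option" where
  "rDB A B = (\<lambda>((s, \<beta>), u). if reach A \<beta> s \<and> reach B \<beta> u then Some u else None)"

definition SX :: "('t, 'a) automaton \<Rightarrow> 'a list \<Rightarrow> 'a \<Rightarrow> 't set" where
  "SX B \<beta> x = {w. \<exists>v. reach B \<beta> v \<and> (v, Ext x, w) \<in> steps B}"

fun nD :: "('t, 'a) automaton \<Rightarrow> (('s \<times> 'a list) \<times> 'a act \<times> ('s \<times> 'a list)) + ('s \<times> 'a list) \<Rightarrow>
    ('s \<times> 'a list) \<times> 't \<Rightarrow> nat" where
  "nD B (Inr c) d = dist B (start B) (snd d)"
| "nD B (Inl ((s, \<beta>), a, c')) d = (case a of Tau \<Rightarrow> 0 | Ext x \<Rightarrow> dist B (SX B \<beta> x) (snd d))"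

lemma inv_rel_rC: "((s', c) \<in> inv_rel (rC A)) = (\<exists>\<beta>. c = (s', \<beta>) \<and> reach A \<beta> s')"
  by (cases c) (auto simp: inv_rel_def rC_def)

lemma inv_rel_rD: "((c, d) \<in> inv_rel (rD A B)) = (\<exists>u. d = (c, u) \<and> reach A (snd c) (fst c) \<and> reach B (snd c) u)"
  by (cases c; cases d) (auto simp: inv_rel_def rD_def split: if_splits)

lemma C0_aut: assumes A: "is_automaton A" shows "is_automaton (C0 A)"
  unfolding is_automaton_def
proof (intro conjI)
  show "start (C0 A) \<noteq> {}" using A by (simp add: C0_def is_automaton_def)
  show "start (C0 A) \<subseteq> states (C0 A)" using reach_start[OF A] by (auto simp: C0_def)
  show "Tau \<in> acts (C0 A)" using A by (simp add: C0_def is_automaton_def)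
  show "steps (C0 A) \<subseteq> states (C0 A) \<times> acts (C0 A) \<times> states (C0 A)"
  proof
    fix p assume "p \<in> steps (C0 A)"
    then obtain s \<beta> a t \<beta>' where p: "p = ((s, \<beta>), a, (t, \<beta>'))" "reach A \<beta> s" "(s, a, t) \<in> steps A" "\<beta>' = \<beta> @ tr a"
      by (auto simp: C0_def)
    have "reach A \<beta>' t" using reach_snoc[OF A p(2,3)] p(4) by simp
    moreover have "a \<in> acts A" using A p(3) by (auto simp: is_automaton_def)
    ultimately show "p \<in> states (C0 A) \<times> acts (C0 A) \<times> states (C0 A)" using p by (simp add: C0_def)
  qed
qed

lemma D0_aut: assumes A: "is_automaton A" and B: "is_automaton B" shows "is_automaton (D0 A B)"
  unfolding is_automaton_def
proof (intro conjI)
  show "start (D0 A B) \<noteq> {}" using A B by (auto simp: D0_def is_automaton_def)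
  show "start (D0 A B) \<subseteq> states (D0 A B)" using reach_start[OF A] reach_start[OF B] by (auto simp: D0_def)
  show "Tau \<in> acts (D0 A B)" using B by (simp add: D0_def is_automaton_def)
  show "steps (D0 A B) \<subseteq> states (D0 A B) \<times> acts (D0 A B) \<times> states (D0 A B)"
  proof
    fix p assume "p \<in> steps (D0 A B)"
    then obtain s \<beta> u a t \<beta>' v where p: "p = (((s, \<beta>), u), a, ((t, \<beta>'), v))" "dstep A B ((s, \<beta>), u) a ((t, \<beta>'), v)"
      by (auto simp: D0_def)
    have r: "reach A \<beta> s" "reach B \<beta> u" using p(2) by auto
    have d: "(a = Tau \<and> (s, Tau, t) \<in> steps A \<and> \<beta>' = \<beta> \<and> v = u) \<or>
      (a \<noteq> Tau \<and> (s, a, t) \<in> steps A \<and> \<beta>' = \<beta> @ tr a \<and> (u, a, v) \<in> steps B) \<or>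
      (a = Tau \<and> t = s \<and> \<beta>' = \<beta> \<and> (u, Tau, v) \<in> steps B)" using p(2) by simp
    have BT: "Tau \<in> acts B" using B by (simp add: is_automaton_def)
    have "reach A \<beta>' t \<and> reach B \<beta>' v \<and> a \<in> acts B"
      using d
    proof (elim disjE conjE)
      assume "a = Tau" "(s, Tau, t) \<in> steps A" "\<beta>' = \<beta>" "v = u"
      then show ?thesis using reach_snoc[OF A r(1), of Tau t] r BT by simp
    next
      assume "a \<noteq> Tau" "(s, a, t) \<in> steps A" "\<beta>' = \<beta> @ tr a" "(u, a, v) \<in> steps B"
      then show ?thesis using reach_snoc[OF A r(1), of a t] reach_snoc[OF B r(2), of a v] B
        by (auto simp: is_automaton_def)
    next
      assume "a = Tau" "t = s" "\<beta>' = \<beta>" "(u, Tau, v) \<in> steps B"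
      then show ?thesis using reach_snoc[OF B r(2), of Tau v] r BT by simp
    qed
    then show "p \<in> states (D0 A B) \<times> acts (D0 A B) \<times> states (D0 A B)" using p(1) r by (simp add: D0_def)
  qed
qed

lemma C0_SR: assumes A: "is_automaton A" shows "step_refinement (C0 A) A (rC A)"
  unfolding step_refinement_def
proof (intro conjI allI ballI impI)
  show "dom (rC A) \<subseteq> states (C0 A)" by (auto simp: rC_def C0_def split: if_splits)
  show "ran (rC A) \<subseteq> states A" using reach_states[OF A] by (auto simp: rC_def ran_def split: if_splits)
next
  fix c assume "c \<in> start (C0 A)"
  then obtain s where "c = (s, [])" "s \<in> start A" by (auto simp: C0_def)
  then show "c \<in> dom (rC A)" "the (rC A c) \<in> start A" using reach_start[OF A] by (auto simp: rC_def)
next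
  fix c a c' assume st: "(c, a, c') \<in> steps (C0 A) \<and> c \<in> dom (rC A)"
  then obtain s \<beta> t where p: "c = (s, \<beta>)" "c' = (t, \<beta> @ tr a)" "reach A \<beta> s" "(s, a, t) \<in> steps A"
    by (cases c; cases c') (auto simp: C0_def)
  have "reach A (\<beta> @ tr a) t" by (rule reach_snoc[OF A p(3,4)])
  then show "c' \<in> dom (rC A)" "rC A c = rC A c' \<and> a = Tau \<or> (the (rC A c), a, the (rC A c')) \<in> steps A"
    using p by (auto simp: rC_def)
qed

lemma C0_fwd: assumes A: "is_automaton A"
  shows "normed_fwd_sim A (C0 A) (inv_rel (rC A)) (\<lambda>_ _. ()) {}"
  unfolding normed_fwd_sim_def
proof (intro conjI allI ballI impI)
  show "inv_rel (rC A) \<subseteq> states A \<times> states (C0 A)"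
    using reach_states[OF A] by (auto simp: inv_rel_rC C0_def)
  show "wf_strict ({} :: (unit \<times> unit) set)" by (simp add: wf_strict_def)
next
  fix s assume s: "s \<in> start A"
  then have "(s, []) \<in> inv_rel (rC A) `` {s} \<inter> start (C0 A)"
    using reach_start[OF A s] by (auto simp: inv_rel_rC C0_def)
  then show "inv_rel (rC A) `` {s} \<inter> start (C0 A) \<noteq> {}" by blast
next
  fix s a t u assume st: "(s, a, t) \<in> steps A \<and> u \<in> inv_rel (rC A) `` {s}"
  then obtain \<beta> where u: "u = (s, \<beta>)" "reach A \<beta> s" by (auto simp: inv_rel_rC)
  have "reach A (\<beta> @ tr a) t" using reach_snoc[OF A u(2)] st by blast
  then have "(t, \<beta> @ tr a) \<in> inv_rel (rC A) `` {t} \<and> (u, a, (t, \<beta> @ tr a)) \<in> steps (C0 A)"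
    using u st by (auto simp: inv_rel_rC C0_def)
  then show "u \<in> inv_rel (rC A) `` {t} \<and> a = Tau \<or>
       (\<exists>v\<in>inv_rel (rC A) `` {t}. (u, a, v) \<in> steps (C0 A)) \<or>
       (\<exists>v\<in>inv_rel (rC A) `` {s}. (u, Tau, v) \<in> steps (C0 A) \<and> ((), ()) \<in> {})" by blast
qed

lemma dstep_cases:
  assumes "dstep A B ((s, \<beta>), u) a ((t, \<beta>'), v)"
  obtains "reach A \<beta> s" "reach B \<beta> u" "a = Tau" "(s, Tau, t) \<in> steps A" "\<beta>' = \<beta>" "v = u"
  | "reach A \<beta> s" "reach B \<beta> u" "a \<noteq> Tau" "(s, a, t) \<in> steps A" "\<beta>' = \<beta> @ tr a" "(u, a, v) \<in> steps B"
  | "reach A \<beta> s" "reach B \<beta> u" "a = Tau" "t = s" "\<beta>' = \<beta>" "(u, Tau, v) \<in> steps B"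
  using assms by auto

lemma D0_steps_E:
  assumes "(d, a, d') \<in> steps (D0 A B)"
  obtains s \<beta> u t \<beta>' v where "d = ((s, \<beta>), u)" "d' = ((t, \<beta>'), v)" "dstep A B ((s, \<beta>), u) a ((t, \<beta>'), v)"
  using assms by (cases d; cases d') (auto simp: D0_def)

lemma D0_SRC: assumes A: "is_automaton A" and B: "is_automaton B"
  shows "step_refinement (D0 A B) (C0 A) (rD A B)"
  unfolding step_refinement_def
proof (intro conjI allI ballI impI)
  show "dom (rD A B) \<subseteq> states (D0 A B)" by (auto simp: rD_def D0_def split: if_splits)
  show "ran (rD A B) \<subseteq> states (C0 A)" by (auto simp: rD_def ran_def C0_def split: if_splits)
next
  fix d assume "d \<in> start (D0 A B)"
  then obtain s u where "d = ((s, []), u)" "s \<in> start A" "u \<in> start B" by (auto simp: D0_def)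
  then show "d \<in> dom (rD A B)" "the (rD A B d) \<in> start (C0 A)"
    using reach_start[OF A] reach_start[OF B] by (auto simp: rD_def C0_def)
next
  fix d a d' assume st: "(d, a, d') \<in> steps (D0 A B) \<and> d \<in> dom (rD A B)"
  then obtain s \<beta> u t \<beta>' v where p: "d = ((s, \<beta>), u)" "d' = ((t, \<beta>'), v)" "dstep A B ((s, \<beta>), u) a ((t, \<beta>'), v)"
    by (auto elim: D0_steps_E)
  have "d' \<in> states (D0 A B)" using D0_aut[OF A B] st unfolding is_automaton_def by blast
  then have rd': "reach A \<beta>' t" "reach B \<beta>' v" using p(2) by (auto simp: D0_def)
  from p(3) show "d' \<in> dom (rD A B)" "rD A B d = rD A B d' \<and> a = Tau \<or> (the (rD A B d), a, the (rD A B d')) \<in> steps (C0 A)"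
    using rd' p by (auto elim!: dstep_cases simp: rD_def C0_def)
qed

lemma D0_SRB: assumes A: "is_automaton A" and B: "is_automaton B"
  shows "step_refinement (D0 A B) B (rDB A B)"
  unfolding step_refinement_def
proof (intro conjI allI ballI impI)
  show "dom (rDB A B) \<subseteq> states (D0 A B)" by (auto simp: rDB_def D0_def split: if_splits)
  show "ran (rDB A B) \<subseteq> states B" using reach_states[OF B] by (auto simp: rDB_def ran_def split: if_splits)
next
  fix d assume "d \<in> start (D0 A B)"
  then obtain s u where "d = ((s, []), u)" "s \<in> start A" "u \<in> start B" by (auto simp: D0_def)
  then show "d \<in> dom (rDB A B)" "the (rDB A B d) \<in> start B"
    using reach_start[OF A] reach_start[OF B] by (auto simp: rDB_def)
next
  fix d a d' assume st: "(d, a, d') \<in> steps (D0 A B) \<and> d \<in> dom (rDB A B)"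
  then obtain s \<beta> u t \<beta>' v where p: "d = ((s, \<beta>), u)" "d' = ((t, \<beta>'), v)" "dstep A B ((s, \<beta>), u) a ((t, \<beta>'), v)"
    by (auto elim: D0_steps_E)
  have "d' \<in> states (D0 A B)" using D0_aut[OF A B] st unfolding is_automaton_def by blast
  then have rd': "reach A \<beta>' t" "reach B \<beta>' v" using p(2) by (auto simp: D0_def)
  from p(3) show "d' \<in> dom (rDB A B)" "rDB A B d = rDB A B d' \<and> a = Tau \<or> (the (rDB A B d), a, the (rDB A B d')) \<in> steps B"
    using rd' p by (auto elim!: dstep_cases simp: rDB_def)
qed

lemma D0_bwd: assumes A: "is_automaton A" and B: "is_automaton B" and T: "trace_incl A B"
  shows "normed_bwd_sim (C0 A) (D0 A B) (inv_rel (rD A B)) (nD B) less_than"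
  unfolding normed_bwd_sim_def
proof (intro conjI allI ballI impI)
  show "inv_rel (rD A B) \<subseteq> states (C0 A) \<times> states (D0 A B)"
    by (auto simp: inv_rel_rD C0_def D0_def)
  show "wf_strict less_than" by (simp add: wf_strict_def)
next
  fix c assume "c \<in> states (C0 A)"
  then obtain s \<beta> where c: "c = (s, \<beta>)" "reach A \<beta> s" by (auto simp: C0_def)
  have "\<beta> \<in> traces_star A" by (rule reach_traces[OF c(2)])
  then have "\<beta> \<in> traces_star B" using T unfolding trace_incl_def by (rule subsetD[rotated])
  then obtain u where "reach B \<beta> u" using traces_reach by metis
  then have "(c, u) \<in> inv_rel (rD A B) `` {c}" using c by (simp add: inv_rel_rD)
  then show "inv_rel (rD A B) `` {c} \<noteq> {}" by blast
next
  fix c d assume c0: "c \<in> start (C0 A)" and d: "d \<in> inv_rel (rD A B) `` {c}"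
  then obtain s0 where c: "c = (s0, [])" "s0 \<in> start A" by (auto simp: C0_def)
  obtain u where u: "d = (c, u)" "reach B [] u" using d c by (auto simp: inv_rel_rD)
  obtain u0 where u0: "u0 \<in> start B" "wstep B u0 [] u" using u(2) unfolding reach_def by blast
  obtain k where k: "(tstep B ^^ k) u0 u" using dec0[OF B u0(2)] by blast
  have rs: "reach A [] s0" using reach_start[OF A c(2)] .
  from dist_dec[OF k u0(1)]
  show "d \<in> start (D0 A B) \<or>
         (\<exists>v\<in>inv_rel (rD A B) `` {c}. (v, Tau, d) \<in> steps (D0 A B) \<and> (nD B (Inr c) v, nD B (Inr c) d) \<in> less_than)"
  proof (elim disjE exE conjE)
    assume "u \<in> start B"
    then show ?thesis using u c by (simp add: D0_def)
  next
    fix v j w' assume w': "w' \<in> start B" "(tstep B ^^ j) w' v" "(v, Tau, u) \<in> steps B"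
      "dist B (start B) v < dist B (start B) u"
    have rv: "reach B [] v" using reach_tau[OF B reach_start[OF B w'(1)] w'(2)] .
    have "(c, v) \<in> inv_rel (rD A B) `` {c}" using rv rs c by (simp add: inv_rel_rD)
    moreover have "((c, v), Tau, d) \<in> steps (D0 A B)" using rv rs c u w'(3) by (simp add: D0_def)
    moreover have "(nD B (Inr c) (c, v), nD B (Inr c) d) \<in> less_than" using w'(4) u by simp
    ultimately show ?thesis by blast
  qed
next
  fix c a c' d assume st: "(c, a, c') \<in> steps (C0 A) \<and> d \<in> inv_rel (rD A B) `` {c'}"
  then obtain s \<beta> t where p: "c = (s, \<beta>)" "c' = (t, \<beta> @ tr a)" "reach A \<beta> s" "(s, a, t) \<in> steps A"
    by (cases c; cases c') (auto simp: C0_def)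
  obtain u where u: "d = (c', u)" "reach B (\<beta> @ tr a) u" "reach A (\<beta> @ tr a) t"
    using st p by (auto simp: inv_rel_rD)
  show "d \<in> inv_rel (rD A B) `` {c} \<and> a = Tau \<or>
       (\<exists>v\<in>inv_rel (rD A B) `` {c}. (v, a, d) \<in> steps (D0 A B)) \<or>
       (\<exists>v\<in>inv_rel (rD A B) `` {c'}. (v, Tau, d) \<in> steps (D0 A B) \<and>
          (nD B (Inl (c, a, c')) v, nD B (Inl (c, a, c')) d) \<in> less_than)"
  proof (cases a)
    case Tau
    then have "(c, u) \<in> inv_rel (rD A B) `` {c}" using p u by (simp add: inv_rel_rD)
    moreover have "((c, u), a, d) \<in> steps (D0 A B)" using p u Tau by (simp add: D0_def)
    ultimately show ?thesis by blast
  next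
    case (Ext x)
    have ux: "reach B (\<beta> @ [x]) u" using u(2) Ext by simp
    obtain u0 where u0: "u0 \<in> start B" "wstep B u0 (\<beta> @ [x]) u" using ux unfolding reach_def by blast
    obtain v w k where vwk: "wstep B u0 \<beta> v" "(v, Ext x, w) \<in> steps B" "(tstep B ^^ k) w u"
      using decX[OF B u0(2)] by blast
    have "reach B \<beta> v" using vwk(1) u0(1) unfolding reach_def by blast
    then have wS: "w \<in> SX B \<beta> x" using vwk(2) unfolding SX_def by blast
    from dist_dec[OF vwk(3) wS] show ?thesis
    proof (elim disjE exE conjE)
      assume "u \<in> SX B \<beta> x"
      then obtain v' where v': "reach B \<beta> v'" "(v', Ext x, u) \<in> steps B" unfolding SX_def by blast
      have "(c, v') \<in> inv_rel (rD A B) `` {c}" using p v' by (simp add: inv_rel_rD)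
      moreover have "((c, v'), a, d) \<in> steps (D0 A B)" using p u v' Ext by (simp add: D0_def)
      ultimately show ?thesis by blast
    next
      fix q j w' assume w': "w' \<in> SX B \<beta> x" "(tstep B ^^ j) w' q" "(q, Tau, u) \<in> steps B"
        "dist B (SX B \<beta> x) q < dist B (SX B \<beta> x) u"
      obtain v'' where v'': "reach B \<beta> v''" "(v'', Ext x, w') \<in> steps B" using w'(1) unfolding SX_def by blast
      have "reach B (\<beta> @ [x]) w'" using reach_snoc[OF B v''] by simp
      then have rq: "reach B (\<beta> @ [x]) q" using reach_tau[OF B _ w'(2)] by blast
      have "(c', q) \<in> inv_rel (rD A B) `` {c'}" using p u rq Ext by (simp add: inv_rel_rD)
      moreover have "((c', q), Tau, d) \<in> steps (D0 A B)" using p u rq w'(3) Ext by (simp add: D0_def)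
      moreover have "(nD B (Inl (c, a, c')) (c', q), nD B (Inl (c, a, c')) d) \<in> less_than"
        using w'(4) p u Ext by simp
      ultimately show ?thesis by blast
    qed
  qed
qed

lemma D0_fin: assumes B: "is_automaton B" and F: "fin_invis_nondet B"
  shows "image_finite (inv_rel (rD A B))"
  unfolding image_finite_def
proof
  fix c
  have "inv_rel (rD A B) `` {c} \<subseteq> Pair c ` (\<Union>u0\<in>start B. {u. wstep B u0 (snd c) u})"
    by (auto simp: inv_rel_rD reach_def)
  moreover have "finite (\<Union>u0\<in>start B. {u. wstep B u0 (snd c) u})"
    using F B unfolding fin_invis_nondet_def is_automaton_def by blast
  ultimately show "finite (inv_rel (rD A B) `` {c})" by (meson finite_imageI finite_subset)
qed

definition encC :: "'sa \<times> 'a list \<Rightarrow> ('sa, 'sb, 'a) big_state" where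
  "encC = (\<lambda>(s, \<beta>). {Inl s # map (\<lambda>x. Inr (Inr (Inl (Ext x)))) \<beta>})"

definition encD :: "('sa \<times> 'a list) \<times> 'sb \<Rightarrow> ('sa, 'sb, 'a) big_state" where
  "encD = (\<lambda>((s, \<beta>), u). {Inl s # Inr (Inl u) # map (\<lambda>x. Inr (Inr (Inl (Ext x)))) \<beta>})"

lemma inj_ext_enc: "inj (\<lambda>x::'a. (Inr (Inr (Inl (Ext x))) :: 'sa + 'sb + 'a act + nat))"
  by (auto intro: injI)

lemma inj_encC: "inj (encC :: 'sa \<times> 'a list \<Rightarrow> ('sa, 'sb, 'a) big_state)"
proof (rule injI)
  fix p q :: "'sa \<times> 'a list"
  assume e: "(encC p :: ('sa, 'sb, 'a) big_state) = encC q"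
  obtain s \<beta> s' \<beta>' where pq: "p = (s, \<beta>)" "q = (s', \<beta>')" by (cases p; cases q)
  have "s = s' \<and> map (\<lambda>x::'a. (Inr (Inr (Inl (Ext x))) :: 'sa + 'sb + 'a act + nat)) \<beta> = map (\<lambda>x. Inr (Inr (Inl (Ext x)))) \<beta>'"
    using e pq by (simp add: encC_def)
  then show "p = q" using pq inj_map_eq_map[OF inj_ext_enc] by metis
qed

lemma inj_encD: "inj (encD :: ('sa \<times> 'a list) \<times> 'sb \<Rightarrow> ('sa, 'sb, 'a) big_state)"
proof (rule injI)
  fix p q :: "('sa \<times> 'a list) \<times> 'sb"
  assume e: "(encD p :: ('sa, 'sb, 'a) big_state) = encD q"
  obtain s \<beta> u s' \<beta>' u' where pq: "p = ((s, \<beta>), u)" "q = ((s', \<beta>'), u')" by (cases p; cases q) auto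
  have "s = s' \<and> u = u' \<and> map (\<lambda>x::'a. (Inr (Inr (Inl (Ext x))) :: 'sa + 'sb + 'a act + nat)) \<beta> = map (\<lambda>x. Inr (Inr (Inl (Ext x)))) \<beta>'"
    using e pq by (simp add: encD_def)
  then show "p = q" using pq inj_map_eq_map[OF inj_ext_enc] by metis
qed

theorem mainTheorem4:
  fixes A :: "('sa, 'a) automaton" and B :: "('sb, 'a) automaton"
  assumes "is_automaton A" and "is_automaton B" and "trace_incl A B"
  shows "(\<exists>(C :: (('sa, 'sb, 'a) big_state, 'a) automaton)
             (D :: (('sa, 'sb, 'a) big_state, 'a) automaton).
             is_automaton C \<and> is_automaton D \<and> le_H A C \<and> le_P C D \<and> le_R D B)
       \<and> (fin_invis_nondet B \<longrightarrow>
          (\<exists>(C :: (('sa, 'sb, 'a) big_state, 'a) automaton)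
             (D :: (('sa, 'sb, 'a) big_state, 'a) automaton).
             is_automaton C \<and> is_automaton D \<and> le_H A C \<and> le_iP C D \<and> le_R D B))"
proof -
  note A = assms(1) and B = assms(2) and T = assms(3)
  define eC where "eC = (encC :: 'sa \<times> 'a list \<Rightarrow> ('sa, 'sb, 'a) big_state)"
  define eD where "eD = (encD :: ('sa \<times> 'a list) \<times> 'sb \<Rightarrow> ('sa, 'sb, 'a) big_state)"
  have iC: "inj eC" unfolding eC_def by (rule inj_encC)
  have iD: "inj eD" unfolding eD_def by (rule inj_encD)
  define C where "C = mapA eC (C0 A)"
  define D where "D = mapA eD (D0 A B)"
  have aC: "is_automaton C" unfolding C_def by (rule is_automaton_mapA[OF C0_aut[OF A]])
  have aD: "is_automaton D" unfolding D_def by (rule is_automaton_mapA[OF D0_aut[OF A B]])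
  have H: "le_H A C"
  proof (rule le_H_intro)
    show "step_refinement C A (mapr eC id (rC A))"
      using SR_map[OF C0_SR[OF A] iC inj_on_id] unfolding C_def mapA_id .
    show "normed_fwd_sim A C (inv_rel (mapr eC id (rC A)))
        (\<lambda>(x, a, y) z. (\<lambda>_ _. ()) (inv id x, a, inv id y) (inv eC z)) {}"
      using fwd_map[OF C0_fwd[OF A] inj_on_id iC] unfolding C_def mapA_id inv_rel_mapr[OF iC] .
  qed
  have SRP: "step_refinement D C (mapr eD eC (rD A B))"
    using SR_map[OF D0_SRC[OF A B] iD iC] unfolding C_def D_def .
  have BW: "normed_bwd_sim C D (inv_rel (mapr eD eC (rD A B)))
     (\<lambda>p z. nD B (map_sum (\<lambda>(x, a, y). (inv eC x, a, inv eC y)) (inv eC) p) (inv eD z)) less_than"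
    using bwd_map[OF D0_bwd[OF A B T] iC iD] unfolding C_def D_def inv_rel_mapr[OF iD] .
  have P: "le_P C D" by (rule le_P_intro[OF SRP BW])
  have R: "le_R D B" unfolding le_R_def
    using SR_map[OF D0_SRB[OF A B] iD inj_on_id] unfolding D_def mapA_id by blast
  have iP: "le_iP C D" if F: "fin_invis_nondet B"
  proof (rule le_iP_intro[OF SRP BW])
    show "image_finite (inv_rel (mapr eD eC (rD A B)))"
      unfolding inv_rel_mapr[OF iD] by (rule image_finite_map[OF D0_fin[OF B F] iC])
  qed
  show ?thesis using aC aD H P R iP by blast
qed

end
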